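(* Let $s\ge 2$ and $p,q>0$. Consider on $\mathbb Z$ the Markov process with rates $q(x,x+1)=p$, $q(x,x-1)=q$ (and $0$ otherwise), and the $2$-leg spider walk with span bounded by $s$, i.e. the continuous-time process $S_t=(S_{1,t},S_{2,t})$ on $\{(x,x+j):x\in\mathbb Z,1\le j\le s\}$ in which each leg jumps by $+1$ at rate $p$ and by $-1$ at rate $q$, a jump being performed only if afterwards the legs occupy distinct sites at distance at most $s$ (and the configuration is then relabeled so that the first leg is the leftmost one). Then almost surely $\lim_{t\to\infty} S_{1,t}/t=(p-q)\left(1-\frac1s\right)$. In particular this speed is strictly smaller in absolute value than $|p-q|$ when $p\ne q$, and converges to $p-q$ as $s\to\infty$. *)

theory Defs
  imports "HOL-Probability.Probability"
begin

text \<open>A move is a pair (second_leg, up): which leg attempts to jump (False = first leg,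
  True = second leg) and in which direction (True = +1, False = -1).\<close>

definition spider_step :: "nat \<Rightarrow> int \<times> int \<Rightarrow> bool \<times> bool \<Rightarrow> int \<times> int" where
  "spider_step s c m =
     (let d = (if snd m then 1 else -1);
          a' = (if fst m then fst c else fst c + d);
          b' = (if fst m then snd c + d else snd c)
      in if a' \<noteq> b' \<and> \<bar>a' - b'\<bar> \<le> int s then (min a' b', max a' b') else c)"

primrec spider_chain :: "nat \<Rightarrow> int \<times> int \<Rightarrow> (nat \<Rightarrow> bool \<times> bool) \<Rightarrow> nat \<Rightarrow> int \<times> int" where
  "spider_chain s c0 \<xi> 0 = c0"
| "spider_chain s c0 \<xi> (Suc n) = spider_step s (spider_chain s c0 \<xi> n) (\<xi> n)"

text \<open>Number of clock rings up to time t, the n-th ring happening at time T 0 + ... + T n.\<close>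
definition num_rings :: "(nat \<Rightarrow> real) \<Rightarrow> real \<Rightarrow> nat" where
  "num_rings T t = card {n. (\<Sum>i\<le>n. T i) \<le> t}"

text \<open>Continuous-time spider walk (uniformization construction): a Poisson clock of total
  rate 2(p+q) rings; at each ring an attempted move (leg, direction) is chosen with
  probabilities p/(2(p+q)) for +1 and q/(2(p+q)) for -1 for each leg.\<close>
definition spider_walk ::
  "nat \<Rightarrow> int \<times> int \<Rightarrow> (nat \<Rightarrow> real) \<Rightarrow> (nat \<Rightarrow> bool \<times> bool) \<Rightarrow> real \<Rightarrow> int \<times> int" where
  "spider_walk s c0 T \<xi> t = spider_chain s c0 \<xi> (num_rings T t)"

end

theory Submission
  imports Defs "HOL-Library.Discrete_Functions" "HOL-Real_Asymp.Real_Asymp"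
begin



definition valid :: "nat \<Rightarrow> int \<times> int \<Rightarrow> bool" where
  "valid s c \<longleftrightarrow> 1 \<le> snd c - fst c \<and> snd c - fst c \<le> int s"

lemma valid_step: "valid s c \<Longrightarrow> valid s (spider_step s c m)"
  unfolding valid_def spider_step_def Let_def by (auto split: if_splits)

lemma chain_foldl: "spider_chain s c0 \<xi> k = foldl (spider_step s) c0 (map \<xi> [0..<k])"
  by (induction k) auto

lemma valid_foldl: "valid s c \<Longrightarrow> valid s (foldl (spider_step s) c l)"
proof (induction l arbitrary: c)
  case (Cons x l) thus ?case using valid_step by simp
qed simp

lemma valid_chain: "valid s c0 \<Longrightarrow> valid s (spider_chain s c0 \<xi> k)"
  by (simp add: chain_foldl valid_foldl)

lemma step_FT: "1 \<le> b - a \<Longrightarrow> b - a \<le> int s \<Longrightarrow> spider_step s (a,b) (False,True) = (if 2 \<le> b - a then (a+1,b) else (a,b))"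
  unfolding spider_step_def Let_def by auto
lemma step_FF: "1 \<le> b - a \<Longrightarrow> spider_step s (a,b) (False,False) = (if b - a + 1 \<le> int s then (a - 1,b) else (a,b))"
  unfolding spider_step_def Let_def by auto
lemma step_TT: "1 \<le> b - a \<Longrightarrow> spider_step s (a,b) (True,True) = (if b - a + 1 \<le> int s then (a,b+1) else (a,b))"
  unfolding spider_step_def Let_def by auto
lemma step_TF: "1 \<le> b - a \<Longrightarrow> b - a \<le> int s \<Longrightarrow> spider_step s (a,b) (True,False) = (if 2 \<le> b - a then (a,b - 1) else (a,b))"
  unfolding spider_step_def Let_def by auto

definition u1 :: "nat \<Rightarrow> real \<Rightarrow> real" where "u1 s g = (g - 1) * (g / real s - 2)"
definition u2 :: "nat \<Rightarrow> real \<Rightarrow> real" where "u2 s g = u1 s (real s + 1 - g)"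
definition ww :: "nat \<Rightarrow> real \<Rightarrow> real \<Rightarrow> real \<Rightarrow> real" where
  "ww s p q g = (q * u2 s g - p * u1 s g) / (2 * (p + q))"
definition vv :: "nat \<Rightarrow> real \<Rightarrow> real \<Rightarrow> real" where
  "vv s p q = (p - q) * (1 - 1 / real s) / (2 * (p + q))"
definition gap :: "int \<times> int \<Rightarrow> real" where "gap c = real_of_int (snd c - fst c)"

definition GG :: "nat \<Rightarrow> real \<Rightarrow> real \<Rightarrow> int \<times> int \<Rightarrow> bool \<times> bool \<Rightarrow> real" where
  "GG s p q c m = (if valid s c then
      real_of_int (fst (spider_step s c m) - fst c) + ww s p q (gap (spider_step s c m))
        - ww s p q (gap c) - vv s p q else 0)"

definition pim :: "real \<Rightarrow> real \<Rightarrow> bool \<times> bool \<Rightarrow> real" where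
  "pim p q m = (if snd m then p else q) / (2 * (p + q))"

lemma UNIV_bb: "(UNIV :: (bool \<times> bool) set) = {(False,False),(False,True),(True,False),(True,True)}"
  by auto

lemma ww_interior: "s \<ge> 2 \<Longrightarrow> p + q > 0 \<Longrightarrow>
   ww s p q (x+1) + ww s p q (x-1) = 2 * ww s p q x - (p - q) / (real s * (p + q))"
proof -
  assume a: "s \<ge> 2" "p + q > 0"
  define t where "t = p + q"
  have ne: "real s \<noteq> 0" "t \<noteq> 0" and p: "p = t - q" using a by (auto simp: t_def)
  show ?thesis unfolding ww_def u1_def u2_def p using ne by (simp add: field_simps)
qed

lemma ww_low: "s \<ge> 2 \<Longrightarrow> p + q > 0 \<Longrightarrow>
   ww s p q 2 = ww s p q 1 + 2 * vv s p q + q / (p + q)"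
proof -
  assume a: "s \<ge> 2" "p + q > 0"
  define t where "t = p + q"
  have ne: "real s \<noteq> 0" "t \<noteq> 0" and p: "p = t - q" using a by (auto simp: t_def)
  show ?thesis unfolding ww_def u1_def u2_def vv_def p using ne by (simp add: field_simps)
qed

lemma ww_high: "s \<ge> 2 \<Longrightarrow> p + q > 0 \<Longrightarrow>
   ww s p q (real s - 1) = ww s p q (real s) + 2 * vv s p q - p / (p + q)"
proof -
  assume a: "s \<ge> 2" "p + q > 0"
  define t where "t = p + q"
  have ne: "real s \<noteq> 0" "t \<noteq> 0" and p: "p = t - q" using a by (auto simp: t_def)
  show ?thesis unfolding ww_def u1_def u2_def vv_def p using ne by (simp add: field_simps)
qed

lemma aux_int: "s \<ge> 2 \<Longrightarrow> p + q > 0 \<Longrightarrow>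
   (p + q) * (- (p - q) / (real s * (p + q)) - 2 * vv s p q) = - (p - q)"
proof -
  assume a: "s \<ge> 2" "p + q > 0"
  define t where "t = p + q"
  have ne: "real s \<noteq> 0" "t \<noteq> 0" and p: "p = t - q" using a by (auto simp: t_def)
  show ?thesis unfolding vv_def p using ne by (simp add: field_simps)
qed

lemma GG_sum0:
  assumes "s \<ge> 2" "p > 0" "q > 0"
  shows "(\<Sum>m\<in>UNIV. pim p q m * GG s p q c m) = 0"
proof (cases "valid s c")
  case False thus ?thesis by (simp add: GG_def)
next
  case True
  obtain a b where "c = (a,b)" by (cases c)
  then obtain g where c: "c = (a,a+g)" by (intro that[of "b - a"]) simp
  have g: "1 \<le> g" "g \<le> int s" using True by (auto simp: valid_def c)
  have K: "2 * (p + q) > 0" using assms by simp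
  define x where "x = real_of_int g"
  have gc: "gap c = x" "gap (a, a + g) = x" by (simp_all add: gap_def c x_def)
  have g1: "gap (a + 1, a + g) = x - 1" "gap (a - 1, a + g) = x + 1" "gap (a, a + g + 1) = x + 1" "gap (a, a + g - 1) = x - 1"
    by (simp_all add: gap_def x_def)
  note defs = GG_def step_FT step_FF step_TT step_TF valid_def c gc g1
  have "(\<Sum>m\<in>UNIV. pim p q m * GG s p q c m) =
     (p * (GG s p q c (False,True) + GG s p q c (True,True)) + q * (GG s p q c (False,False) + GG s p q c (True,False))) / (2 * (p + q))"
    by (simp add: UNIV_bb pim_def add_divide_distrib distrib_left)
  also have "p * (GG s p q c (False,True) + GG s p q c (True,True)) + q * (GG s p q c (False,False) + GG s p q c (True,False)) = 0"
  proof -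
    have s2: "real s \<ge> 2" using assms by simp
    have pq: "p + q > 0" using assms by simp
    consider "g = 1" | "g = int s" | "2 \<le> g \<and> g + 1 \<le> int s" using g assms by linarith
    then show ?thesis
    proof cases
      case 1
      have "int s \<ge> 2" using assms by simp
      hence x: "x = 1" "\<not> 2 \<le> g" "g + 1 \<le> int s" using 1 by (auto simp: x_def)
      have vals: "GG s p q c (False,True) = - vv s p q" "GG s p q c (True,False) = - vv s p q"
        "GG s p q c (False,False) = -1 + ww s p q 2 - ww s p q 1 - vv s p q"
        "GG s p q c (True,True) = ww s p q 2 - ww s p q 1 - vv s p q"
        using True g x by (simp_all add: defs)
      have "p * (GG s p q c (False,True) + GG s p q c (True,True)) + q * (GG s p q c (False,False) + GG s p q c (True,False))
         = (p + q) * (ww s p q 2 - ww s p q 1 - 2 * vv s p q) - q" unfolding vals by (simp add: algebra_simps)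
      moreover have "(p + q) * (ww s p q 2 - ww s p q 1 - 2 * vv s p q) = q"
        using ww_low[OF assms(1) pq] pq by simp
      ultimately show ?thesis by simp
    next
      case 2
      hence x: "x = real s" "2 \<le> g" "\<not> g + 1 \<le> int s" using assms by (auto simp: x_def)
      have vals: "GG s p q c (False,True) = 1 + ww s p q (real s - 1) - ww s p q (real s) - vv s p q"
        "GG s p q c (True,False) = ww s p q (real s - 1) - ww s p q (real s) - vv s p q"
        "GG s p q c (False,False) = - vv s p q"
        "GG s p q c (True,True) = - vv s p q"
        using True g x by (simp_all add: defs)
      have "p * (GG s p q c (False,True) + GG s p q c (True,True)) + q * (GG s p q c (False,False) + GG s p q c (True,False))
         = (p + q) * (ww s p q (real s - 1) - ww s p q (real s) - 2 * vv s p q) + p" unfolding vals by (simp add: algebra_simps)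
      moreover have "(p + q) * (ww s p q (real s - 1) - ww s p q (real s) - 2 * vv s p q) = - p"
        using ww_high[OF assms(1) pq] pq by simp
      ultimately show ?thesis by simp
    next
      case 3
      hence x: "2 \<le> g" "g + 1 \<le> int s" by auto
      have vals: "GG s p q c (False,True) = 1 + ww s p q (x - 1) - ww s p q x - vv s p q"
        "GG s p q c (True,False) = ww s p q (x - 1) - ww s p q x - vv s p q"
        "GG s p q c (False,False) = -1 + ww s p q (x + 1) - ww s p q x - vv s p q"
        "GG s p q c (True,True) = ww s p q (x + 1) - ww s p q x - vv s p q"
        using True g x by (simp_all add: defs)
      have "p * (GG s p q c (False,True) + GG s p q c (True,True)) + q * (GG s p q c (False,False) + GG s p q c (True,False))
         = (p + q) * (ww s p q (x + 1) + ww s p q (x - 1) - 2 * ww s p q x - 2 * vv s p q) + (p - q)" unfolding vals by (simp add: algebra_simps)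
      moreover have "(p + q) * (ww s p q (x + 1) + ww s p q (x - 1) - 2 * ww s p q x - 2 * vv s p q) = - (p - q)"
      proof -
        have "ww s p q (x + 1) + ww s p q (x - 1) - 2 * ww s p q x = - (p - q) / (real s * (p + q))"
          using ww_interior[OF assms(1) pq, of x] by (simp add: minus_divide_left)
        thus ?thesis using aux_int[OF assms(1) pq] by simp
      qed
      ultimately show ?thesis by simp
    qed
  qed
  finally show ?thesis by simp
qed




lemma sqrt_to_top: "filterlim (\<lambda>n. floor_sqrt n - 1) at_top sequentially"
  unfolding filterlim_at_top
proof
  fix Z :: nat
  show "eventually (\<lambda>n. Z \<le> floor_sqrt n - 1) sequentially"
  proof (rule eventually_sequentiallyI[of "(Suc Z)^2"])
    fix n assume "(Suc Z)^2 \<le> n"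
    hence "Suc Z \<le> floor_sqrt n" by (rule le_floor_sqrtI)
    thus "Z \<le> floor_sqrt n - 1" by simp
  qed
qed

lemma incr_bound:
  fixes S :: "nat \<Rightarrow> real"
  assumes B: "\<And>n. \<bar>S (Suc n) - S n\<bar> \<le> B" and kn: "k \<le> n"
  shows "\<bar>S n - S k\<bar> \<le> B * real (n - k)"
  using kn
proof (induction n rule: dec_induct)
  case base thus ?case by simp
next
  case (step n)
  have "\<bar>S (Suc n) - S k\<bar> \<le> \<bar>S (Suc n) - S n\<bar> + \<bar>S n - S k\<bar>" by simp
  also have "\<dots> \<le> B + B * real (n - k)" using B[of n] step.IH by simp
  also have "\<dots> = B * real (Suc n - k)" using step.hyps by (simp add: Suc_diff_le algebra_simps)
  finally show ?case .
qed

lemma interp_bounded: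
  fixes S :: "nat \<Rightarrow> real"
  assumes B: "\<And>n. \<bar>S (Suc n) - S n\<bar> \<le> B"
    and lim: "(\<lambda>m. S ((Suc m)^2) / real ((Suc m)^2)) \<longlonglongrightarrow> 0"
  shows "(\<lambda>n. S n / real n) \<longlonglongrightarrow> 0"
proof -
  have B0: "0 \<le> B" using B[of 0] by simp
  define f where "f m = \<bar>S ((Suc m)^2)\<bar> / real ((Suc m)^2) + 2 * B / real (Suc m)" for m
  have f0: "f \<longlonglongrightarrow> 0"
  proof -
    have "(\<lambda>m. \<bar>S ((Suc m)^2) / real ((Suc m)^2)\<bar>) \<longlonglongrightarrow> 0"
      using tendsto_rabs_zero[OF lim] .
    moreover have "(\<lambda>m. 2 * B / real (Suc m)) \<longlonglongrightarrow> 0"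
      using LIMSEQ_Suc[OF tendsto_mult_right_zero[OF lim_inverse_n', of "2 * B"]] by (simp add: divide_inverse)
    ultimately show ?thesis unfolding f_def using tendsto_add_zero by (simp add: abs_divide)
  qed
  have lim2: "(\<lambda>n. f (floor_sqrt n - 1)) \<longlonglongrightarrow> 0"
    using filterlim_compose[OF f0 sqrt_to_top] .
  have ev: "eventually (\<lambda>n. norm (S n / real n) \<le> f (floor_sqrt n - 1)) sequentially"
  proof (rule eventually_sequentiallyI[of 1])
    fix n :: nat assume n1: "1 \<le> n"
    define r where "r = floor_sqrt n"
    have r1: "r \<ge> 1" using n1 by (simp add: r_def Suc_le_eq)
    have rn: "r^2 \<le> n" "n < (Suc r)^2" unfolding r_def by (rule floor_sqrt_power2_le, rule Suc_floor_sqrt_power2_gt)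
    have sr: "Suc (r - 1) = r" using r1 by simp
    have d: "real (n - r^2) \<le> 2 * real r"
    proof -
      have "n - r^2 \<le> 2 * r" using rn(2) by (simp add: power2_eq_square)
      thus ?thesis by (metis of_nat_le_iff of_nat_mult of_nat_numeral)
    qed
    have "\<bar>S n\<bar> \<le> \<bar>S (r^2)\<bar> + \<bar>S n - S (r^2)\<bar>" by simp
    also have "\<dots> \<le> \<bar>S (r^2)\<bar> + B * (2 * real r)"
      using incr_bound[of S B, OF B rn(1)] mult_left_mono[OF d B0] by simp
    finally have Sn: "\<bar>S n\<bar> \<le> \<bar>S (r^2)\<bar> + 2 * B * real r" by simp
    have rpos: "0 < real (r^2)" using r1 by simp
    have rle: "real (r^2) \<le> real n" using rn(1) by linarith
    have "norm (S n / real n) = \<bar>S n\<bar> / real n" by simp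
    also have "\<dots> \<le> (\<bar>S (r^2)\<bar> + 2 * B * real r) / real n"
      by (rule divide_right_mono[OF Sn]) simp
    also have "\<dots> \<le> (\<bar>S (r^2)\<bar> + 2 * B * real r) / real (r^2)"
    proof (rule divide_left_mono[OF rle])
      show "0 \<le> \<bar>S (r\<^sup>2)\<bar> + 2 * B * real r" using B0 by (intro add_nonneg_nonneg mult_nonneg_nonneg) auto
      show "0 < real n * real (r\<^sup>2)" using rpos n1 by (intro mult_pos_pos) auto
    qed
    also have "\<dots> = \<bar>S (r^2)\<bar> / real (r^2) + 2 * B / real r"
      using r1 by (simp add: add_divide_distrib power2_eq_square)
    also have "\<dots> = f (floor_sqrt n - 1)" unfolding f_def r_def[symmetric] sr ..
    finally show "norm (S n / real n) \<le> f (floor_sqrt n - 1)" .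
  qed
  show ?thesis by (rule Lim_null_comparison[OF ev lim2])
qed




lemma sqrt_to_top': "filterlim floor_sqrt at_top sequentially"
  unfolding filterlim_at_top
proof
  fix Z :: nat
  show "eventually (\<lambda>n. Z \<le> floor_sqrt n) sequentially"
    by (rule eventually_sequentiallyI[of "Z^2"]) (rule le_floor_sqrtI)
qed

lemma ratio1: "(\<lambda>m::nat. real m ^ 2 / real (Suc m) ^ 2) \<longlonglongrightarrow> 1"
  by real_asymp
lemma ratio2: "(\<lambda>m::nat. real (Suc m) ^ 2 / real m ^ 2) \<longlonglongrightarrow> 1"
  by real_asymp
lemma ratio3: "(\<lambda>m::nat. real (Suc m) / real m) \<longlonglongrightarrow> 1"
  by real_asymp

lemma sq_ratios:
  shows "(\<lambda>n. real ((floor_sqrt n)^2) / real n) \<longlonglongrightarrow> 1"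
    and "(\<lambda>n. real ((Suc (floor_sqrt n))^2) / real n) \<longlonglongrightarrow> 1"
proof -
  have A: "(\<lambda>n. real (floor_sqrt n) ^ 2 / real (Suc (floor_sqrt n)) ^ 2) \<longlonglongrightarrow> 1"
    using filterlim_compose[OF ratio1 sqrt_to_top'] .
  have B: "(\<lambda>n. real (Suc (floor_sqrt n)) ^ 2 / real (floor_sqrt n) ^ 2) \<longlonglongrightarrow> 1"
    using filterlim_compose[OF ratio2 sqrt_to_top'] .
  have ev: "eventually (\<lambda>n. 1 \<le> n) sequentially" by (rule eventually_sequentiallyI[of 1]) auto
  show "(\<lambda>n. real ((floor_sqrt n)^2) / real n) \<longlonglongrightarrow> 1"
  proof (rule tendsto_sandwich[OF _ _ A tendsto_const])
    show "eventually (\<lambda>n. real (floor_sqrt n) ^ 2 / real (Suc (floor_sqrt n)) ^ 2 \<le> real ((floor_sqrt n)^2) / real n) sequentially"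
      using ev
    proof eventually_elim
      case (elim n)
      have "real n \<le> real (Suc (floor_sqrt n)) ^ 2"
        using Suc_floor_sqrt_power2_gt[of n] by (metis less_imp_le of_nat_le_iff of_nat_power)
      thus ?case using elim unfolding of_nat_power by (intro divide_left_mono) auto
    qed
    show "eventually (\<lambda>n. real ((floor_sqrt n)^2) / real n \<le> 1) sequentially"
      using ev
    proof eventually_elim
      case (elim n)
      have "real ((floor_sqrt n)^2) \<le> real n" using floor_sqrt_power2_le[of n] of_nat_le_iff by blast
      thus ?case using elim by simp
    qed
  qed
  show "(\<lambda>n. real ((Suc (floor_sqrt n))^2) / real n) \<longlonglongrightarrow> 1"
  proof (rule tendsto_sandwich[OF _ _ tendsto_const B])
    show "eventually (\<lambda>n. 1 \<le> real ((Suc (floor_sqrt n))^2) / real n) sequentially"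
      using ev
    proof eventually_elim
      case (elim n)
      have "real n \<le> real ((Suc (floor_sqrt n))^2)"
        using Suc_floor_sqrt_power2_gt[of n] by linarith
      thus ?case using elim by simp
    qed
    show "eventually (\<lambda>n. real ((Suc (floor_sqrt n))^2) / real n \<le> real (Suc (floor_sqrt n)) ^ 2 / real (floor_sqrt n) ^ 2) sequentially"
      using ev
    proof eventually_elim
      case (elim n)
      have "real (floor_sqrt n ^ 2) \<le> real n" using floor_sqrt_power2_le[of n] of_nat_le_iff by blast
      moreover have "0 < floor_sqrt n" using elim by simp
      ultimately show ?case unfolding of_nat_power by (intro divide_left_mono) auto
    qed
  qed
qed

lemma interp_mono:
  fixes S :: "nat \<Rightarrow> real"
  assumes mono: "\<And>m n. m \<le> n \<Longrightarrow> S m \<le> S n"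
    and lim: "(\<lambda>m. S ((Suc m)^2) / real ((Suc m)^2)) \<longlonglongrightarrow> \<mu>"
  shows "(\<lambda>n. S n / real n) \<longlonglongrightarrow> \<mu>"
proof -
  define g where "g m = S ((Suc m)^2) / real ((Suc m)^2)" for m
  have L: "(\<lambda>n. g (floor_sqrt n - 1) * (real ((floor_sqrt n)^2) / real n)) \<longlonglongrightarrow> \<mu>"
    using tendsto_mult[OF filterlim_compose[OF lim[folded g_def] sqrt_to_top] sq_ratios(1)] by simp
  have U: "(\<lambda>n. g (floor_sqrt n) * (real ((Suc (floor_sqrt n))^2) / real n)) \<longlonglongrightarrow> \<mu>"
    using tendsto_mult[OF filterlim_compose[OF lim[folded g_def] sqrt_to_top'] sq_ratios(2)] by simp
  show ?thesis
  proof (rule tendsto_sandwich[OF _ _ L U])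
    have ev: "eventually (\<lambda>n. 1 \<le> n) sequentially" by (rule eventually_sequentiallyI[of 1]) auto
    show "eventually (\<lambda>n. g (floor_sqrt n - 1) * (real ((floor_sqrt n)^2) / real n) \<le> S n / real n) sequentially"
      using ev
    proof eventually_elim
      case (elim n)
      have r: "Suc (floor_sqrt n - 1) = floor_sqrt n" using elim by (simp add: Suc_le_eq)
      have "0 < (floor_sqrt n)^2" using elim by simp
      hence "g (floor_sqrt n - 1) * (real ((floor_sqrt n)^2) / real n) = S ((floor_sqrt n)^2) / real n"
        unfolding g_def r by simp
      also have "\<dots> \<le> S n / real n" using mono[OF floor_sqrt_power2_le[of n]] by (simp add: divide_right_mono)
      finally show ?case .
    qed
    show "eventually (\<lambda>n. S n / real n \<le> g (floor_sqrt n) * (real ((Suc (floor_sqrt n))^2) / real n)) sequentially"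
    proof (rule always_eventually, rule allI)
      fix n
      have e: "g (floor_sqrt n) * (real ((Suc (floor_sqrt n))^2) / real n) = S ((Suc (floor_sqrt n))^2) / real n"
        unfolding g_def by (simp del: of_nat_power)
      have "S n \<le> S ((Suc (floor_sqrt n))^2)" using Suc_floor_sqrt_power2_gt[of n] by (intro mono) simp
      thus "S n / real n \<le> g (floor_sqrt n) * (real ((Suc (floor_sqrt n))^2) / real n)"
        unfolding e by (rule divide_right_mono) simp
    qed
  qed
qed




lemma renewal:
  fixes T :: "nat \<Rightarrow> real" and a :: "nat \<Rightarrow> real"
  assumes T0: "\<And>i. 0 \<le> T i"
    and LT: "(\<lambda>n. (\<Sum>i<n. T i) / real n) \<longlonglongrightarrow> \<mu>" and mu: "\<mu> > 0"
    and La: "(\<lambda>n. a n / real n) \<longlonglongrightarrow> v"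
  shows "((\<lambda>t. a (num_rings T t) / t) \<longlongrightarrow> v / \<mu>) at_top"
proof -
  define P where "P n = (\<Sum>i\<le>n. T i)" for n
  have Pmono: "P m \<le> P n" if "m \<le> n" for m n
    unfolding P_def using that T0 by (intro sum_mono2) auto
  have Psuc: "P n = (\<Sum>i<Suc n. T i)" for n unfolding P_def lessThan_Suc_atMost ..
  have unb: "\<exists>n. t < P n" for t
  proof -
    have "eventually (\<lambda>n. \<mu> / 2 < (\<Sum>i<n. T i) / real n) sequentially"
      using order_tendstoD(1)[OF LT, of "\<mu> / 2"] mu by linarith
    then obtain N where N: "\<And>n. n \<ge> N \<Longrightarrow> \<mu> / 2 < (\<Sum>i<n. T i) / real n"
      by (auto simp: eventually_sequentially)
    define n where "n = N + nat \<lceil>2 * \<bar>t\<bar> / \<mu>\<rceil> + 1"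
    have n0: "real n > 0" unfolding n_def by simp
    have "2 * \<bar>t\<bar> / \<mu> \<le> real n" unfolding n_def by linarith
    hence "\<bar>t\<bar> \<le> \<mu> / 2 * real n" using mu by (simp add: field_simps)
    also have "\<dots> < (\<Sum>i<n. T i)" using N[of n] n0 by (simp add: n_def field_simps)
    also have "\<dots> \<le> P n" unfolding P_def using T0 by (intro sum_mono2) auto
    finally show ?thesis by (intro exI[of _ n]) linarith
  qed
  define N where "N t = (LEAST n. t < P n)" for t
  have N1: "t < P (N t)" for t unfolding N_def using unb[of t] by (rule LeastI_ex)
  have N2: "n < N t \<Longrightarrow> P n \<le> t" for n t unfolding N_def using not_less_Least by fastforce
  have Nr: "num_rings T t = N t" for t
  proof -
    have "{n. (\<Sum>i\<le>n. T i) \<le> t} = {..<N t}"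
    proof safe
      fix n assume "(\<Sum>i\<le>n. T i) \<le> t"
      hence "P n \<le> t" by (simp add: P_def)
      show "n < N t"
      proof (rule ccontr)
        assume "\<not> n < N t"
        hence "P (N t) \<le> P n" by (intro Pmono) simp
        thus False using N1[of t] \<open>P n \<le> t\<close> by simp
      qed
    next
      fix n assume "n < N t" thus "(\<Sum>i\<le>n. T i) \<le> t" using N2 by (simp add: P_def)
    qed
    thus ?thesis unfolding num_rings_def by simp
  qed
  have Ntop: "filterlim N at_top at_top"
    unfolding filterlim_at_top
  proof
    fix Z :: nat
    show "eventually (\<lambda>t. Z \<le> N t) at_top"
    proof (rule eventually_at_top_linorderI[of "P Z"])
      fix t assume "P Z \<le> t"
      show "Z \<le> N t"
      proof (rule ccontr)
        assume "\<not> Z \<le> N t"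
        hence "P (N t) \<le> P Z" by (intro Pmono) simp
        thus False using N1[of t] \<open>P Z \<le> t\<close> by simp
      qed
    qed
  qed
  have evN: "eventually (\<lambda>t. 1 \<le> N t) at_top" using Ntop by (simp add: filterlim_at_top)
  have low: "((\<lambda>t. (\<Sum>i<N t. T i) / real (N t)) \<longlongrightarrow> \<mu>) at_top"
    using filterlim_compose[OF LT Ntop] .
  have up: "((\<lambda>t. (\<Sum>i<Suc (N t). T i) / real (Suc (N t)) * (real (Suc (N t)) / real (N t))) \<longlongrightarrow> \<mu>) at_top"
    using tendsto_mult[OF filterlim_compose[OF LIMSEQ_Suc[OF LT] Ntop] filterlim_compose[OF ratio3 Ntop]] by simp
  have tN: "((\<lambda>t. t / real (N t)) \<longlongrightarrow> \<mu>) at_top"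
  proof (rule tendsto_sandwich[OF _ _ low up])
    show "eventually (\<lambda>t. (\<Sum>i<N t. T i) / real (N t) \<le> t / real (N t)) at_top"
      using evN
    proof eventually_elim
      case (elim t)
      have "(\<Sum>i<N t. T i) = P (N t - 1)" using elim by (simp add: Psuc)
      also have "\<dots> \<le> t" using N2[of "N t - 1" t] elim by simp
      finally show ?case by (rule divide_right_mono) simp
    qed
    show "eventually (\<lambda>t. t / real (N t) \<le> (\<Sum>i<Suc (N t). T i) / real (Suc (N t)) * (real (Suc (N t)) / real (N t))) at_top"
      using evN
    proof eventually_elim
      case (elim t)
      have e: "(\<Sum>i<Suc (N t). T i) / real (Suc (N t)) * (real (Suc (N t)) / real (N t)) = P (N t) / real (N t)"
        by (simp add: Psuc del: of_nat_Suc)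
      have "t \<le> P (N t)" using N1[of t] by simp
      thus ?case unfolding e by (rule divide_right_mono) simp
    qed
  qed
  have Nt: "((\<lambda>t. real (N t) / t) \<longlongrightarrow> 1 / \<mu>) at_top"
    using tendsto_inverse[OF tN] mu by (simp add: inverse_eq_divide)
  have aN: "((\<lambda>t. a (N t) / real (N t)) \<longlongrightarrow> v) at_top"
    using filterlim_compose[OF La Ntop] .
  have "((\<lambda>t. a (N t) / real (N t) * (real (N t) / t)) \<longlongrightarrow> v / \<mu>) at_top"
    using tendsto_mult[OF aN Nt] by simp
  hence "((\<lambda>t. a (N t) / t) \<longlongrightarrow> v / \<mu>) at_top"
  proof (rule Lim_transform_eventually)
    show "eventually (\<lambda>t. a (N t) / real (N t) * (real (N t) / t) = a (N t) / t) at_top"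
      using evN by eventually_elim simp
  qed
  thus ?thesis unfolding Nr .
qed




lemma summable_sq_inv: "summable (\<lambda>m. c / real (Suc m) ^ 2)"
proof -
  have "summable (\<lambda>n. inverse (real n ^ 2))" by (rule inverse_power_summable) simp
  hence "summable (\<lambda>m. inverse (real (Suc m) ^ 2))" by (subst summable_Suc_iff)
  hence "summable (\<lambda>m. c * inverse (real (Suc m) ^ 2))" by (rule summable_mult)
  thus ?thesis by (simp add: divide_inverse)
qed

lemma (in prob_space) second_moment_sum:
  fixes Z :: "nat \<Rightarrow> 'a \<Rightarrow> real"
  assumes int: "\<And>j k. integrable M (\<lambda>\<omega>. Z j \<omega> * Z k \<omega>)"
    and orth: "\<And>j k. j \<noteq> k \<Longrightarrow> expectation (\<lambda>\<omega>. Z j \<omega> * Z k \<omega>) = 0"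
    and bnd: "\<And>k. expectation (\<lambda>\<omega>. Z k \<omega> * Z k \<omega>) \<le> C"
  shows "integrable M (\<lambda>\<omega>. (\<Sum>k<n. Z k \<omega>)^2)"
    and "expectation (\<lambda>\<omega>. (\<Sum>k<n. Z k \<omega>)^2) \<le> real n * C"
proof -
  have sq: "(\<Sum>k<n. Z k \<omega>)^2 = (\<Sum>j<n. \<Sum>k<n. Z j \<omega> * Z k \<omega>)" for \<omega>
    by (simp add: power2_eq_square sum_product)
  show "integrable M (\<lambda>\<omega>. (\<Sum>k<n. Z k \<omega>)^2)"
    unfolding sq by (simp add: int)
  have "expectation (\<lambda>\<omega>. (\<Sum>k<n. Z k \<omega>)^2) = (\<Sum>j<n. \<Sum>k<n. expectation (\<lambda>\<omega>. Z j \<omega> * Z k \<omega>))"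
    unfolding sq using int by (simp add: integrable_sum)
  also have "\<dots> = (\<Sum>j<n. expectation (\<lambda>\<omega>. Z j \<omega> * Z j \<omega>))"
  proof (rule sum.cong[OF refl])
    fix j assume "j \<in> {..<n}"
    have "(\<Sum>k<n. expectation (\<lambda>\<omega>. Z j \<omega> * Z k \<omega>)) = (\<Sum>k<n. if k = j then expectation (\<lambda>\<omega>. Z j \<omega> * Z j \<omega>) else 0)"
      using orth by (intro sum.cong) auto
    also have "\<dots> = expectation (\<lambda>\<omega>. Z j \<omega> * Z j \<omega>)" using \<open>j \<in> {..<n}\<close> by simp
    finally show "(\<Sum>k<n. expectation (\<lambda>\<omega>. Z j \<omega> * Z k \<omega>)) = expectation (\<lambda>\<omega>. Z j \<omega> * Z j \<omega>)" .
  qed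
  also have "\<dots> \<le> (\<Sum>j<n. C)" by (intro sum_mono bnd)
  also have "\<dots> = real n * C" by simp
  finally show "expectation (\<lambda>\<omega>. (\<Sum>k<n. Z k \<omega>)^2) \<le> real n * C" .
qed

lemma (in prob_space) slln_orth:
  fixes Z :: "nat \<Rightarrow> 'a \<Rightarrow> real"
  assumes meas[measurable]: "\<And>k. Z k \<in> borel_measurable M"
    and int: "\<And>j k. integrable M (\<lambda>\<omega>. Z j \<omega> * Z k \<omega>)"
    and orth: "\<And>j k. j \<noteq> k \<Longrightarrow> expectation (\<lambda>\<omega>. Z j \<omega> * Z k \<omega>) = 0"
    and bnd: "\<And>k. expectation (\<lambda>\<omega>. Z k \<omega> * Z k \<omega>) \<le> C"
  shows "AE \<omega> in M. (\<lambda>m. (\<Sum>k<(Suc m)^2. Z k \<omega>) / real ((Suc m)^2)) \<longlonglongrightarrow> 0"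
proof -
  define S where "S n \<omega> = (\<Sum>k<n. Z k \<omega>)" for n \<omega>
  have Smeas[measurable]: "S n \<in> borel_measurable M" for n unfolding S_def by measurable
  define A where "A r m = {\<omega> \<in> space M. real ((Suc m)^2) / real (Suc r) \<le> \<bar>S ((Suc m)^2) \<omega>\<bar>}" for r m
  have Asets[measurable]: "A r m \<in> sets M" for r m unfolding A_def by measurable
  have Abnd: "measure M (A r m) \<le> C * real (Suc r) ^ 2 / real (Suc m) ^ 2" for r m
  proof -
    define N where "N = (Suc m)^2"
    define a where "a = real N / real (Suc r)"
    have a0: "a > 0" unfolding a_def N_def by simp
    have "measure M (A r m) = measure M {\<omega> \<in> space M. a \<le> \<bar>S N \<omega>\<bar>}" unfolding A_def a_def N_def ..
    also have "\<dots> \<le> expectation (\<lambda>\<omega>. (S N \<omega>)^2) / a^2"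
      by (rule second_moment_method[OF Smeas second_moment_sum(1)[where Z=Z and C=C, OF int orth bnd, folded S_def] a0])
    also have "\<dots> \<le> real N * C / a^2"
      by (rule divide_right_mono[OF second_moment_sum(2)[where Z=Z and C=C, OF int orth bnd, folded S_def]]) (use a0 in auto)
    also have "\<dots> = C * real (Suc r) ^ 2 / real (Suc m) ^ 2"
    proof -
      have g: "x * C / (x / R)^2 = C * R^2 / x" if "x > 0" "R \<noteq> 0" for x R :: real
        using that by (simp add: field_simps power2_eq_square)
      show ?thesis unfolding a_def using g[of "real N" "real (Suc r)"] by (simp add: N_def del: of_nat_Suc)
    qed
    finally show ?thesis .
  qed
  have "AE \<omega> in M. eventually (\<lambda>m. \<omega> \<in> space M - A r m) sequentially" for r
  proof (rule borel_cantelli_AE1)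
    show "A r m \<in> sets M" for m by simp
    show "emeasure M (A r m) < \<infinity>" for m by (simp add: emeasure_eq_measure)
    show "summable (\<lambda>m. measure M (A r m))"
      by (rule summable_comparison_test'[OF summable_sq_inv[of "C * real (Suc r) ^ 2"], of 0])
         (use Abnd in auto)
  qed
  hence "AE \<omega> in M. \<forall>r. eventually (\<lambda>m. \<omega> \<in> space M - A r m) sequentially"
    by (simp add: AE_all_countable)
  thus ?thesis
  proof (rule AE_mp, intro AE_I2 impI)
    fix \<omega> assume \<omega>: "\<omega> \<in> space M" and ev: "\<forall>r. eventually (\<lambda>m. \<omega> \<in> space M - A r m) sequentially"
    show "(\<lambda>m. (\<Sum>k<(Suc m)^2. Z k \<omega>) / real ((Suc m)^2)) \<longlonglongrightarrow> 0"
    proof (rule LIMSEQ_I)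
      fix e :: real assume e: "0 < e"
      obtain r where r: "r > 0" "inverse (real r) < e" using ex_inverse_of_nat_less[OF e] by blast
      from ev[rule_format, of r] obtain M0 where M0: "\<And>m. m \<ge> M0 \<Longrightarrow> \<omega> \<notin> A r m"
        by (auto simp: eventually_sequentially)
      show "\<exists>no. \<forall>m\<ge>no. norm ((\<Sum>k<(Suc m)^2. Z k \<omega>) / real ((Suc m)^2) - 0) < e"
      proof (intro exI allI impI)
        fix m assume "m \<ge> M0"
        hence "\<not> real ((Suc m)^2) / real (Suc r) \<le> \<bar>S ((Suc m)^2) \<omega>\<bar>" using M0[of m] \<omega> by (auto simp: A_def)
        hence lt: "\<bar>S ((Suc m)^2) \<omega>\<bar> < real ((Suc m)^2) / real (Suc r)" by simp
        have pos: "0 < real ((Suc m)^2)" by simp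
        have "norm ((\<Sum>k<(Suc m)^2. Z k \<omega>) / real ((Suc m)^2) - 0) = \<bar>S ((Suc m)^2) \<omega>\<bar> / real ((Suc m)^2)"
          by (simp add: S_def)
        also have "\<dots> < 1 / real (Suc r)" using lt pos by (simp add: divide_less_eq)
        also have "\<dots> \<le> inverse (real r)" using r by (simp add: inverse_eq_divide frac_le)
        finally show "norm ((\<Sum>k<(Suc m)^2. Z k \<omega>) / real ((Suc m)^2) - 0) < e" using r by simp
      qed
    qed
  qed
qed




lemma (in prob_space) indep_sets_reindex:
  assumes ind: "indep_sets F (f ` I)" and inj: "inj_on f I"
  shows "indep_sets (\<lambda>i. F (f i)) I"
  unfolding indep_sets_def
proof (intro conjI ballI allI impI)
  fix i assume "i \<in> I"
  thus "F (f i) \<subseteq> events" using ind by (auto simp: indep_sets_def)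
next
  fix J A assume J: "J \<subseteq> I" "J \<noteq> {}" "finite J" and A: "A \<in> Pi J (\<lambda>i. F (f i))"
  define A' where "A' y = A (the_inv_into J f y)" for y
  have injJ: "inj_on f J" using inj J(1) by (rule inj_on_subset)
  have A'f: "A' (f j) = A j" if "j \<in> J" for j
    unfolding A'_def using the_inv_into_f_f[OF injJ that] by simp
  have "prob (\<Inter>y\<in>f ` J. A' y) = (\<Prod>y\<in>f ` J. prob (A' y))"
  proof -
    have "f ` J \<subseteq> f ` I" using J by auto
    moreover have "A' \<in> Pi (f ` J) F" using A A'f by auto
    ultimately show ?thesis using ind J unfolding indep_sets_def by (metis finite_imageI image_is_empty)
  qed
  moreover have "(\<Inter>y\<in>f ` J. A' y) = (\<Inter>j\<in>J. A j)" using A'f by auto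
  moreover have "(\<Prod>y\<in>f ` J. prob (A' y)) = (\<Prod>j\<in>J. prob (A j))"
    using prod.reindex[OF injJ, of "\<lambda>y. prob (A' y)"] A'f by simp
  ultimately show "prob (\<Inter>j\<in>J. A j) = (\<Prod>j\<in>J. prob (A j))" by simp
qed

lemma map_upt_meas:
  "k \<le> n \<Longrightarrow> (\<lambda>f. map f [0..<k]) \<in> measurable (Pi\<^sub>M {..<n} (\<lambda>_. count_space (UNIV :: 'b :: countable set))) (count_space UNIV)"
proof (induction k)
  case 0 thus ?case by simp
next
  case (Suc k)
  have kn: "k \<in> {..<n}" using Suc.prems by simp
  have "(\<lambda>f. (\<lambda>l x. l @ [x k]) (map f [0..<k]) f) \<in> measurable (Pi\<^sub>M {..<n} (\<lambda>_. count_space (UNIV :: 'b set))) (count_space UNIV)"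
  proof (rule measurable_compose_countable'[where f="\<lambda>l x. l @ [x k]" and g="\<lambda>f. map f [0..<k]" and I=UNIV])
    show "(\<lambda>x. l @ [x k]) \<in> measurable (Pi\<^sub>M {..<n} (\<lambda>_. count_space (UNIV :: 'b set))) (count_space UNIV)" for l :: "'b list"
      by (rule measurable_compose[OF measurable_component_singleton[OF kn]]) simp
    show "(\<lambda>f. map f [0..<k]) \<in> measurable (Pi\<^sub>M {..<n} (\<lambda>_. count_space (UNIV :: 'b set))) (count_space UNIV)"
      using Suc by simp
  qed simp
  thus ?case by simp
qed

lemma (in prob_space) indep_prefix:
  fixes X :: "nat \<Rightarrow> 'a \<Rightarrow> 'b :: countable"
  assumes ind: "indep_vars (\<lambda>_. count_space UNIV) X UNIV"
  shows "indep_var (count_space UNIV) (\<lambda>\<omega>. map (\<lambda>i. X i \<omega>) [0..<k]) (count_space UNIV) (\<lambda>\<omega>. [X k \<omega>])"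
proof -
  have "indep_var (Pi\<^sub>M {..<k} (\<lambda>_. count_space UNIV)) (\<lambda>\<omega>. restrict (\<lambda>i. X i \<omega>) {..<k})
                   (Pi\<^sub>M {k} (\<lambda>_. count_space UNIV)) (\<lambda>\<omega>. restrict (\<lambda>i. X i \<omega>) {k})"
    by (rule indep_var_restrict[OF ind]) auto
  hence "indep_var (count_space UNIV) ((\<lambda>f. map f [0..<k]) \<circ> (\<lambda>\<omega>. restrict (\<lambda>i. X i \<omega>) {..<k}))
                   (count_space UNIV) ((\<lambda>f. [f k]) \<circ> (\<lambda>\<omega>. restrict (\<lambda>i. X i \<omega>) {k}))"
    by (rule indep_var_compose) (auto intro: map_upt_meas measurable_compose[OF measurable_component_singleton])
  moreover have "(\<lambda>f. map f [0..<k]) \<circ> (\<lambda>\<omega>. restrict (\<lambda>i. X i \<omega>) {..<k}) = (\<lambda>\<omega>. map (\<lambda>i. X i \<omega>) [0..<k])"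
    by (auto simp: fun_eq_iff)
  moreover have "(\<lambda>f. [f k]) \<circ> (\<lambda>\<omega>. restrict (\<lambda>i. X i \<omega>) {k}) = (\<lambda>\<omega>. [X k \<omega>])"
    by (auto simp: fun_eq_iff)
  ultimately show ?thesis by simp
qed

lemma (in prob_space) indep_pair:
  fixes X :: "nat \<Rightarrow> 'a \<Rightarrow> 'b"
  assumes ind: "indep_vars (\<lambda>_. N) X UNIV" and "j \<noteq> k"
  shows "indep_var N (X j) N (X k)"
proof -
  have "indep_var (Pi\<^sub>M {j} (\<lambda>_. N)) (\<lambda>\<omega>. restrict (\<lambda>i. X i \<omega>) {j})
                   (Pi\<^sub>M {k} (\<lambda>_. N)) (\<lambda>\<omega>. restrict (\<lambda>i. X i \<omega>) {k})"
    by (rule indep_var_restrict[OF ind]) (use assms in auto)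
  hence "indep_var N ((\<lambda>f. f j) \<circ> (\<lambda>\<omega>. restrict (\<lambda>i. X i \<omega>) {j}))
                   N ((\<lambda>f. f k) \<circ> (\<lambda>\<omega>. restrict (\<lambda>i. X i \<omega>) {k}))"
    by (rule indep_var_compose) (auto intro: measurable_component_singleton)
  moreover have "(\<lambda>f. f j) \<circ> (\<lambda>\<omega>. restrict (\<lambda>i. X i \<omega>) {j}) = X j" by (auto simp: fun_eq_iff)
  moreover have "(\<lambda>f. f k) \<circ> (\<lambda>\<omega>. restrict (\<lambda>i. X i \<omega>) {k}) = X k" by (auto simp: fun_eq_iff)
  ultimately show ?thesis by simp
qed




lemma u1_bound: assumes "1 \<le> g" "g \<le> real s" shows "\<bar>u1 s g\<bar> \<le> 2 * real s"
proof -
  have s0: "real s > 0" using assms by simp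
  have a: "0 \<le> g - 1" "g - 1 \<le> real s" using assms by auto
  have "g / real s \<le> 1" using assms s0 by simp
  moreover have "0 \<le> g / real s" using assms s0 by simp
  ultimately have b: "\<bar>g / real s - 2\<bar> \<le> 2" by simp
  have "\<bar>u1 s g\<bar> = \<bar>g - 1\<bar> * \<bar>g / real s - 2\<bar>" by (simp add: u1_def abs_mult)
  also have "\<dots> \<le> real s * 2" using a b by (intro mult_mono) auto
  finally show ?thesis by simp
qed

lemma ww_bound:
  assumes "valid s c" "p > 0" "q > 0"
  shows "\<bar>ww s p q (gap c)\<bar> \<le> real s"
proof -
  define g where "g = gap c"
  have g: "1 \<le> g" "g \<le> real s" using assms(1) by (auto simp: valid_def g_def gap_def)
  have b1: "\<bar>u1 s g\<bar> \<le> 2 * real s" by (rule u1_bound[OF g])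
  have b2: "\<bar>u2 s g\<bar> \<le> 2 * real s" unfolding u2_def by (rule u1_bound) (use g in auto)
  have "\<bar>q * u2 s g - p * u1 s g\<bar> \<le> q * \<bar>u2 s g\<bar> + p * \<bar>u1 s g\<bar>"
    using assms by (simp add: abs_mult abs_triangle_ineq4[THEN order_trans])
  also have "\<dots> \<le> q * (2 * real s) + p * (2 * real s)"
    using assms b1 b2 by (intro add_mono mult_left_mono) auto
  also have "\<dots> = 2 * (p + q) * real s" by (simp add: algebra_simps)
  finally have "\<bar>q * u2 s g - p * u1 s g\<bar> / (2 * (p + q)) \<le> real s"
    using assms by (simp add: divide_le_eq mult.commute)
  moreover have "\<bar>2 * (p + q)\<bar> = 2 * (p + q)" using assms by simp
  ultimately show ?thesis unfolding ww_def g_def[symmetric] abs_divide by simp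
qed

lemma fst_step_bound: "valid s c \<Longrightarrow> \<bar>fst (spider_step s c m) - fst c\<bar> \<le> 1"
  unfolding valid_def spider_step_def Let_def by (auto split: if_splits)

definition BB :: "nat \<Rightarrow> real \<Rightarrow> real \<Rightarrow> real" where "BB s p q = 1 + 2 * real s + \<bar>vv s p q\<bar>"

lemma GG_bound: assumes "p > 0" "q > 0" shows "\<bar>GG s p q c m\<bar> \<le> BB s p q"
proof (cases "valid s c")
  case True
  have "\<bar>GG s p q c m\<bar> \<le> \<bar>real_of_int (fst (spider_step s c m) - fst c)\<bar> + \<bar>ww s p q (gap (spider_step s c m))\<bar>
        + \<bar>ww s p q (gap c)\<bar> + \<bar>vv s p q\<bar>"
    using True by (simp add: GG_def)
  also have "\<dots> \<le> 1 + real s + real s + \<bar>vv s p q\<bar>"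
    using fst_step_bound[OF True, of m] ww_bound[OF True assms] ww_bound[OF valid_step[OF True] assms, of m]
    by (intro add_mono) linarith+
  finally show ?thesis by (simp add: BB_def)
qed (simp add: GG_def BB_def)

lemma telescope:
  assumes "valid s c0"
  shows "(\<Sum>k<n. GG s p q (spider_chain s c0 \<xi> k) (\<xi> k)) =
     real_of_int (fst (spider_chain s c0 \<xi> n)) - real_of_int (fst c0) + ww s p q (gap (spider_chain s c0 \<xi> n))
       - ww s p q (gap c0) - real n * vv s p q"
proof (induction n)
  case (Suc n)
  have v: "valid s (spider_chain s c0 \<xi> n)" by (rule valid_chain[OF assms])
  show ?case using Suc v by (simp add: GG_def algebra_simps)
qed simp




lemma (in prob_space) indep_orth:
  fixes L :: "'a \<Rightarrow> (bool \<times> bool) list" and Y :: "'a \<Rightarrow> bool \<times> bool"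
    and F :: "(bool \<times> bool) list \<Rightarrow> bool \<times> bool \<Rightarrow> real"
  assumes ind: "indep_var (count_space UNIV) L (count_space UNIV) (\<lambda>\<omega>. [Y \<omega>])"
    and bnd: "\<And>l m. \<bar>F l m\<bar> \<le> B"
    and pY: "\<And>m. prob {\<omega> \<in> space M. Y \<omega> = m} = \<pi> m"
    and zero: "\<And>l. (\<Sum>m\<in>UNIV. \<pi> m * F l m) = 0"
  shows "expectation (\<lambda>\<omega>. F (L \<omega>) (Y \<omega>)) = 0"
proof -
  have rvL: "L \<in> measurable M (count_space UNIV)" using indep_var_rv1[OF ind] .
  have rvY: "(\<lambda>\<omega>. [Y \<omega>]) \<in> measurable M (count_space UNIV)" using indep_var_rv2[OF ind] .
  define I where "I (m :: bool \<times> bool) (y :: bool \<times> bool) = (indicator {[m]} [y] :: real)" for m y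
  have mF: "(\<lambda>\<omega>. F (L \<omega>) m) \<in> borel_measurable M" for m
    by (rule measurable_compose[OF rvL]) simp
  have mI: "(\<lambda>\<omega>. I m (Y \<omega>)) \<in> borel_measurable M" for m
    unfolding I_def by (rule measurable_compose[OF rvY, of "indicator {[m]}"]) simp
  have intF: "integrable M (\<lambda>\<omega>. F (L \<omega>) m)" for m
    by (rule integrable_const_bound[of _ B]) (use bnd mF in auto)
  have intI: "integrable M (\<lambda>\<omega>. I m (Y \<omega>))" for m
    by (rule integrable_const_bound[of _ 1]) (use mI in \<open>auto simp: I_def\<close>)
  have indm: "indep_var borel (\<lambda>\<omega>. F (L \<omega>) m) borel (\<lambda>\<omega>. I m (Y \<omega>))" for m
  proof -
    have "indep_var borel ((\<lambda>l. F l m) \<circ> L) borel (indicator {[m]} \<circ> (\<lambda>\<omega>. [Y \<omega>]))"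
      by (rule indep_var_compose[OF ind]) auto
    thus ?thesis by (simp add: comp_def I_def)
  qed
  have EI: "expectation (\<lambda>\<omega>. I m (Y \<omega>)) = \<pi> m" for m
  proof -
    have "expectation (\<lambda>\<omega>. I m (Y \<omega>)) = expectation (indicator {\<omega> \<in> space M. Y \<omega> = m})"
      by (rule Bochner_Integration.integral_cong) (auto simp: I_def indicator_def)
    also have "\<dots> = prob {\<omega> \<in> space M. Y \<omega> = m}" by (simp add: Int_absorb2 subset_iff)
    finally show ?thesis using pY by simp
  qed
  have split: "F (L \<omega>) (Y \<omega>) = (\<Sum>m\<in>UNIV. F (L \<omega>) m * I m (Y \<omega>))" for \<omega>
  proof -
    have "(\<Sum>m\<in>UNIV. F (L \<omega>) m * I m (Y \<omega>)) = (\<Sum>m\<in>UNIV. if m = Y \<omega> then F (L \<omega>) m else 0)"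
      by (intro sum.cong) (auto simp: I_def)
    thus ?thesis by simp
  qed
  have "expectation (\<lambda>\<omega>. F (L \<omega>) (Y \<omega>)) = (\<Sum>m\<in>UNIV. expectation (\<lambda>\<omega>. F (L \<omega>) m * I m (Y \<omega>)))"
    unfolding split by (rule Bochner_Integration.integral_sum) (use indep_var_integrable[OF indm intF intI] in auto)
  also have "\<dots> = (\<Sum>m\<in>UNIV. expectation (\<lambda>\<omega>. F (L \<omega>) m) * \<pi> m)"
    using indep_var_lebesgue_integral[OF indm intF intI] EI by simp
  also have "\<dots> = expectation (\<lambda>\<omega>. \<Sum>m\<in>UNIV. \<pi> m * F (L \<omega>) m)"
    by (subst Bochner_Integration.integral_sum) (use intF in \<open>auto simp: mult.commute\<close>)
  also have "\<dots> = 0" using zero by simp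
  finally show ?thesis .
qed




lemma (in prob_space) spider_slln:
  fixes \<xi> :: "nat \<Rightarrow> 'a \<Rightarrow> bool \<times> bool"
  assumes ind\<xi>: "indep_vars (\<lambda>_. count_space UNIV) \<xi> UNIV"
    and p\<xi>: "\<And>k m. prob {\<omega> \<in> space M. \<xi> k \<omega> = m} = pim p q m"
    and s: "s \<ge> 2" and p: "p > 0" and q: "q > 0" and c0: "valid s c0"
  shows "AE \<omega> in M. (\<lambda>n. real_of_int (fst (spider_chain s c0 (\<lambda>i. \<xi> i \<omega>) n)) / real n) \<longlonglongrightarrow> vv s p q"
proof -
  define L where "L k \<omega> = map (\<lambda>i. \<xi> i \<omega>) [0..<k]" for k \<omega>
  have indL: "indep_var (count_space UNIV) (L k) (count_space UNIV) (\<lambda>\<omega>. [\<xi> k \<omega>])" for k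
    unfolding L_def by (rule indep_prefix[OF ind\<xi>])
  have mL: "L k \<in> measurable M (count_space UNIV)" for k using indep_var_rv1[OF indL] .
  define Z where "Z k \<omega> = GG s p q (spider_chain s c0 (\<lambda>i. \<xi> i \<omega>) k) (\<xi> k \<omega>)" for k \<omega>
  define \<Phi> where "\<Phi> j l = GG s p q (foldl (spider_step s) c0 (take j l)) (l ! j)" for j l
  define \<Psi> where "\<Psi> l m = GG s p q (foldl (spider_step s) c0 l) m" for l m
  have ZPhi: "Z j \<omega> = \<Phi> j (L k \<omega>)" if "j < k" for j k \<omega>
    using that unfolding Z_def \<Phi>_def L_def chain_foldl by (simp add: take_map min_def)
  have ZPsi: "Z k \<omega> = \<Psi> (L k \<omega>) (\<xi> k \<omega>)" for k \<omega>
    unfolding Z_def \<Psi>_def L_def chain_foldl by simp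
  have Zb: "\<bar>Z k \<omega>\<bar> \<le> BB s p q" for k \<omega> unfolding Z_def by (rule GG_bound[OF p q])
  have B0: "0 \<le> BB s p q" using Zb[of 0] by (meson abs_ge_zero order_trans)
  have ZZb: "\<bar>Z j \<omega> * Z k \<omega>\<bar> \<le> BB s p q * BB s p q" for j k \<omega>
    unfolding abs_mult by (rule mult_mono[OF Zb Zb B0 abs_ge_zero])
  have Zm[measurable]: "Z k \<in> borel_measurable M" for k
  proof -
    have "Z k = (\<lambda>\<omega>. \<Phi> k (L (Suc k) \<omega>))" using ZPhi[of k "Suc k"] by auto
    also have "\<dots> \<in> borel_measurable M" by (rule measurable_compose[OF mL]) simp
    finally show ?thesis .
  qed
  have Zint: "integrable M (\<lambda>\<omega>. Z j \<omega> * Z k \<omega>)" for j k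
  proof (rule integrable_const_bound[of _ "BB s p q * BB s p q"])
    show "AE \<omega> in M. norm (Z j \<omega> * Z k \<omega>) \<le> BB s p q * BB s p q"
      using ZZb by simp
  qed simp
  have orth1: "expectation (\<lambda>\<omega>. Z j \<omega> * Z k \<omega>) = 0" if "j < k" for j k
  proof -
    have "expectation (\<lambda>\<omega>. Z j \<omega> * Z k \<omega>) = expectation (\<lambda>\<omega>. (\<lambda>l m. \<Phi> j l * \<Psi> l m) (L k \<omega>) (\<xi> k \<omega>))"
      using ZPhi[OF that] ZPsi by simp
    also have "\<dots> = 0"
    proof (rule indep_orth[OF indL, where B="BB s p q * BB s p q" and \<pi>="pim p q"])
      show "\<bar>\<Phi> j l * \<Psi> l m\<bar> \<le> BB s p q * BB s p q" for l m
        unfolding \<Phi>_def \<Psi>_def abs_mult by (rule mult_mono[OF GG_bound[OF p q] GG_bound[OF p q] B0 abs_ge_zero])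
      show "prob {\<omega> \<in> space M. \<xi> k \<omega> = m} = pim p q m" for m by (rule p\<xi>)
      show "(\<Sum>m\<in>UNIV. pim p q m * (\<Phi> j l * \<Psi> l m)) = 0" for l
      proof -
        have "(\<Sum>m\<in>UNIV. pim p q m * (\<Phi> j l * \<Psi> l m)) = \<Phi> j l * (\<Sum>m\<in>UNIV. pim p q m * \<Psi> l m)"
          by (simp add: sum_distrib_left algebra_simps)
        also have "\<dots> = 0" unfolding \<Psi>_def using GG_sum0[OF s p q] by simp
        finally show ?thesis .
      qed
    qed
    finally show ?thesis .
  qed
  have orth: "expectation (\<lambda>\<omega>. Z j \<omega> * Z k \<omega>) = 0" if "j \<noteq> k" for j k
  proof (cases "j < k")
    case True thus ?thesis by (rule orth1)
  next
    case False
    hence "k < j" using that by simp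
    thus ?thesis using orth1[of k j] by (simp add: mult.commute)
  qed
  have diag: "expectation (\<lambda>\<omega>. Z k \<omega> * Z k \<omega>) \<le> BB s p q * BB s p q" for k
  proof -
    have "expectation (\<lambda>\<omega>. Z k \<omega> * Z k \<omega>) \<le> expectation (\<lambda>\<omega>. BB s p q * BB s p q)"
      by (rule integral_mono[OF Zint]) (auto intro: abs_le_D1[OF ZZb])
    thus ?thesis by (simp add: prob_space)
  qed
  have AE1: "AE \<omega> in M. (\<lambda>m. (\<Sum>k<(Suc m)^2. Z k \<omega>) / real ((Suc m)^2)) \<longlonglongrightarrow> 0"
    by (rule slln_orth[OF Zm Zint orth diag])
  show ?thesis
  proof (rule AE_mp[OF AE1], intro AE_I2 impI)
    fix \<omega> assume \<omega>: "\<omega> \<in> space M" and lim: "(\<lambda>m. (\<Sum>k<(Suc m)^2. Z k \<omega>) / real ((Suc m)^2)) \<longlonglongrightarrow> 0"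
    define S where "S n = (\<Sum>k<n. Z k \<omega>)" for n
    have Sn: "(\<lambda>n. S n / real n) \<longlonglongrightarrow> 0"
      by (rule interp_bounded[of S "BB s p q"]) (use Zb lim in \<open>auto simp: S_def\<close>)
    define a where "a n = real_of_int (fst (spider_chain s c0 (\<lambda>i. \<xi> i \<omega>) n))" for n
    define w where "w n = ww s p q (gap (spider_chain s c0 (\<lambda>i. \<xi> i \<omega>) n))" for n
    define R where "R n = (a 0 - w n + w 0) / real n" for n
    have tel: "S n = a n - a 0 + w n - w 0 - real n * vv s p q" for n
      unfolding S_def Z_def a_def w_def using telescope[OF c0, where n=n and p=p and q=q and \<xi>="\<lambda>i. \<xi> i \<omega>"] by simp
    have wb: "\<bar>w n\<bar> \<le> real s" for n unfolding w_def by (rule ww_bound[OF valid_chain[OF c0] p q])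
    have R0: "R \<longlonglongrightarrow> 0"
    proof (rule Lim_null_comparison)
      show "eventually (\<lambda>n. norm (R n) \<le> (\<bar>a 0\<bar> + 2 * real s) / real n) sequentially"
      proof (rule always_eventually, rule allI)
        fix n
        have "\<bar>a 0 - w n + w 0\<bar> \<le> \<bar>a 0\<bar> + 2 * real s" using wb[of n] wb[of 0] by linarith
        thus "norm (R n) \<le> (\<bar>a 0\<bar> + 2 * real s) / real n"
          unfolding R_def by (simp add: abs_divide divide_right_mono)
      qed
      show "(\<lambda>n. (\<bar>a 0\<bar> + 2 * real s) / real n) \<longlonglongrightarrow> 0" by (rule lim_const_over_n)
    qed
    have "(\<lambda>n. S n / real n + R n + vv s p q) \<longlonglongrightarrow> 0 + 0 + vv s p q"
      by (intro tendsto_add Sn R0 tendsto_const)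
    hence "(\<lambda>n. S n / real n + R n + vv s p q) \<longlonglongrightarrow> vv s p q" by simp
    thus "(\<lambda>n. real_of_int (fst (spider_chain s c0 (\<lambda>i. \<xi> i \<omega>) n)) / real n) \<longlonglongrightarrow> vv s p q"
    proof (rule Lim_transform_eventually)
      show "eventually (\<lambda>n. S n / real n + R n + vv s p q = real_of_int (fst (spider_chain s c0 (\<lambda>i. \<xi> i \<omega>) n)) / real n) sequentially"
      proof (rule eventually_sequentiallyI[of 1])
        fix n :: nat assume "1 \<le> n"
        hence n0: "real n \<noteq> 0" by simp
        show "S n / real n + R n + vv s p q = real_of_int (fst (spider_chain s c0 (\<lambda>i. \<xi> i \<omega>) n)) / real n"
          unfolding R_def tel a_def[symmetric] using n0 by (simp add: field_simps)
      qed
    qed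
  qed
qed




lemma (in prob_space) T_slln:
  fixes T :: "nat \<Rightarrow> 'a \<Rightarrow> real"
  assumes indT: "indep_vars (\<lambda>_. borel) T UNIV"
    and Texp: "\<And>n. distributed M lborel (T n) (exponential_density l)" and l: "l > 0"
  shows "AE \<omega> in M. (\<lambda>n. (\<Sum>i<n. T i \<omega>) / real n) \<longlonglongrightarrow> 1 / l"
    and "AE \<omega> in M. \<forall>n. 0 \<le> T n \<omega>"
proof -
  define \<mu> where "\<mu> = 1 / l"
  have Tm[measurable]: "T n \<in> borel_measurable M" for n
    using distributed_measurable[OF Texp[of n]] by simp
  have ET: "expectation (T n) = \<mu>" for n unfolding \<mu>_def by (rule exponential_distributed_expectation[OF l Texp])
  have VT: "variance (T n) = 1 / l^2" for n by (rule exponential_distributed_variance[OF l Texp])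
  have iT1: "integrable M (T n)" for n using erlang_ith_moment_integrable[OF l Texp, of n 1] by simp
  have iT2: "integrable M (\<lambda>x. (T n x)^2)" for n using erlang_ith_moment_integrable[OF l Texp, of n 2] by simp
  define Z where "Z k \<omega> = T k \<omega> - \<mu>" for k \<omega>
  have Zm[measurable]: "Z k \<in> borel_measurable M" for k unfolding Z_def by measurable
  have iZ: "integrable M (Z k)" for k unfolding Z_def using iT1 by simp
  have EZ: "expectation (Z k) = 0" for k unfolding Z_def using iT1 ET by (simp add: prob_space)
  have indZ: "indep_var borel (Z j) borel (Z k)" if "j \<noteq> k" for j k
  proof -
    have "indep_var borel ((\<lambda>x. x - \<mu>) \<circ> T j) borel ((\<lambda>x. x - \<mu>) \<circ> T k)"
      by (rule indep_var_compose[OF indep_pair[OF indT that]]) auto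
    thus ?thesis by (simp add: comp_def Z_def[abs_def])
  qed
  have iZZd: "integrable M (\<lambda>\<omega>. Z k \<omega> * Z k \<omega>)" for k
  proof -
    have "(\<lambda>\<omega>. Z k \<omega> * Z k \<omega>) = (\<lambda>\<omega>. (T k \<omega>)^2 - 2 * \<mu> * T k \<omega> + \<mu>^2)"
      by (auto simp: Z_def power2_eq_square algebra_simps)
    thus ?thesis using iT1 iT2 by simp
  qed
  have iZZ: "integrable M (\<lambda>\<omega>. Z j \<omega> * Z k \<omega>)" for j k
    by (cases "j = k") (use iZZd indep_var_integrable[OF indZ iZ iZ] in auto)
  have orth: "expectation (\<lambda>\<omega>. Z j \<omega> * Z k \<omega>) = 0" if "j \<noteq> k" for j k
    using indep_var_lebesgue_integral[OF indZ[OF that] iZ iZ] EZ by simp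
  have diag: "expectation (\<lambda>\<omega>. Z k \<omega> * Z k \<omega>) \<le> 1 / l^2" for k
  proof -
    have "expectation (\<lambda>\<omega>. Z k \<omega> * Z k \<omega>) = variance (T k)"
      unfolding Z_def ET by (simp add: power2_eq_square)
    thus ?thesis using VT by simp
  qed
  have AE1: "AE \<omega> in M. (\<lambda>m. (\<Sum>k<(Suc m)^2. Z k \<omega>) / real ((Suc m)^2)) \<longlonglongrightarrow> 0"
    by (rule slln_orth[OF Zm iZZ orth diag])
  show AE0: "AE \<omega> in M. \<forall>n. 0 \<le> T n \<omega>"
  proof (subst AE_all_countable, intro allI)
    fix n
    have "emeasure M (T n -` {..<0} \<inter> space M) = (\<integral>\<^sup>+x. ennreal (exponential_density l x) * indicator {..<0} x \<partial>lborel)"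
      by (rule distributed_emeasure[OF Texp]) simp
    also have "\<dots> = 0"
      by (intro nn_integral_zero' AE_I2) (auto simp: exponential_density_def indicator_def)
    finally have z: "emeasure M (T n -` {..<0} \<inter> space M) = 0" by simp
    show "AE \<omega> in M. 0 \<le> T n \<omega>"
      by (rule AE_I[OF _ z]) auto
  qed
  show "AE \<omega> in M. (\<lambda>n. (\<Sum>i<n. T i \<omega>) / real n) \<longlonglongrightarrow> 1 / l"
    using AE1 AE0
  proof eventually_elim
    case (elim \<omega>)
    have "(\<lambda>m. (\<Sum>k<(Suc m)^2. Z k \<omega>) / real ((Suc m)^2) + \<mu>) \<longlonglongrightarrow> 0 + \<mu>"
      by (intro tendsto_add elim(1) tendsto_const)
    moreover have "(\<Sum>k<(Suc m)^2. Z k \<omega>) / real ((Suc m)^2) + \<mu> = (\<Sum>k<(Suc m)^2. T k \<omega>) / real ((Suc m)^2)" for m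
    proof -
      have "(\<Sum>k<(Suc m)^2. Z k \<omega>) = (\<Sum>k<(Suc m)^2. T k \<omega>) - real ((Suc m)^2) * \<mu>"
        by (simp add: Z_def sum_subtractf)
      moreover have "real ((Suc m)^2) \<noteq> 0" by simp
      ultimately show ?thesis by (simp add: field_simps)
    qed
    ultimately have lim: "(\<lambda>m. (\<Sum>k<(Suc m)^2. T k \<omega>) / real ((Suc m)^2)) \<longlonglongrightarrow> \<mu>" by simp
    have mono: "(\<Sum>i<m. T i \<omega>) \<le> (\<Sum>i<n. T i \<omega>)" if "m \<le> n" for m n
      by (rule sum_mono2) (use that elim(2) in auto)
    have "(\<lambda>n. (\<Sum>i<n. T i \<omega>) / real n) \<longlonglongrightarrow> \<mu>"
      by (rule interp_mono[where S="\<lambda>n. \<Sum>i<n. T i \<omega>", OF mono lim])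
    thus ?case by (simp add: \<mu>_def)
  qed
qed




theorem mainTheorem4:
  fixes M :: "'w measure" and s :: nat and p q :: real and x0 j0 :: int
    and T :: "nat \<Rightarrow> 'w \<Rightarrow> real" and \<xi> :: "nat \<Rightarrow> 'w \<Rightarrow> bool \<times> bool"
  assumes "prob_space M"
    and "s \<ge> 2" and "p > 0" and "q > 0"
    and "1 \<le> j0" and "j0 \<le> int s"
    and T_exp: "\<And>n. distributed M lborel (T n) (exponential_density (2 * (p + q)))"
    and \<xi>_meas: "\<And>n. \<xi> n \<in> measurable M (count_space UNIV)"
    and \<xi>_up: "\<And>n l. measure M {\<omega> \<in> space M. \<xi> n \<omega> = (l, True)} = p / (2 * (p + q))"
    and \<xi>_down: "\<And>n l. measure M {\<omega> \<in> space M. \<xi> n \<omega> = (l, False)} = q / (2 * (p + q))"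
    and indep: "prob_space.indep_sets M
          (\<lambda>i. case i of
                  Inl n \<Rightarrow> {T n -` A \<inter> space M | A. A \<in> sets (borel :: real measure)}
                | Inr n \<Rightarrow> {\<xi> n -` A \<inter> space M | A. A \<in> sets (count_space UNIV)})
          (UNIV :: (nat + nat) set)"
  shows "(AE \<omega> in M.
            ((\<lambda>t. real_of_int (fst (spider_walk s (x0, x0 + j0) (\<lambda>n. T n \<omega>) (\<lambda>n. \<xi> n \<omega>) t)) / t)
               \<longlongrightarrow> (p - q) * (1 - 1 / real s)) at_top)
         \<and> (p \<noteq> q \<longrightarrow> \<bar>(p - q) * (1 - 1 / real s)\<bar> < \<bar>p - q\<bar>)
         \<and> ((\<lambda>r::nat. (p - q) * (1 - 1 / real r)) \<longlongrightarrow> p - q) at_top"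
proof -
  interpret prob_space M by (rule assms(1))
  have pq: "p + q > 0" using assms by simp
  define F where "F = (\<lambda>i. case i of
                  Inl n \<Rightarrow> {T n -` A \<inter> space M | A. A \<in> sets (borel :: real measure)}
                | Inr n \<Rightarrow> {\<xi> n -` A \<inter> space M | A. A \<in> sets (count_space UNIV)})"
  have indF: "indep_sets F UNIV" using indep unfolding F_def .
  have "indep_sets (\<lambda>n. F (Inr n)) UNIV"
    by (rule indep_sets_reindex[OF indep_sets_mono_index[OF _ indF]]) auto
  hence ind\<xi>: "indep_vars (\<lambda>_. count_space UNIV) \<xi> UNIV"
    unfolding indep_vars_def2 using \<xi>_meas by (simp add: F_def)
  have "indep_sets (\<lambda>n. F (Inl n)) UNIV"
    by (rule indep_sets_reindex[OF indep_sets_mono_index[OF _ indF]]) auto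
  hence indT: "indep_vars (\<lambda>_. borel) T UNIV"
    unfolding indep_vars_def2 using distributed_measurable[OF T_exp] by (simp add: F_def)
  have p\<xi>: "prob {\<omega> \<in> space M. \<xi> k \<omega> = m} = pim p q m" for k m
  proof -
    obtain l b where m: "m = (l, b)" by (cases m)
    show ?thesis
    proof (cases b)
      case True thus ?thesis using \<xi>_up[of k l] by (simp add: m pim_def)
    next
      case False thus ?thesis using \<xi>_down[of k l] by (simp add: m pim_def)
    qed
  qed
  have c0: "valid s (x0, x0 + j0)" using assms by (simp add: valid_def)
  have A1: "AE \<omega> in M. (\<lambda>n. real_of_int (fst (spider_chain s (x0, x0 + j0) (\<lambda>i. \<xi> i \<omega>) n)) / real n) \<longlonglongrightarrow> vv s p q"
    by (rule spider_slln[OF ind\<xi> p\<xi> assms(2,3,4) c0])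
  have l: "2 * (p + q) > 0" using pq by simp
  have A2: "AE \<omega> in M. (\<lambda>n. (\<Sum>i<n. T i \<omega>) / real n) \<longlonglongrightarrow> 1 / (2 * (p + q))"
    by (rule T_slln(1)[OF indT T_exp l])
  have A3: "AE \<omega> in M. \<forall>n. 0 \<le> T n \<omega>"
    by (rule T_slln(2)[OF indT T_exp l])
  have val: "vv s p q / (1 / (2 * (p + q))) = (p - q) * (1 - 1 / real s)"
    using pq by (simp add: vv_def)
  have P1: "AE \<omega> in M.
            ((\<lambda>t. real_of_int (fst (spider_walk s (x0, x0 + j0) (\<lambda>n. T n \<omega>) (\<lambda>n. \<xi> n \<omega>) t)) / t)
               \<longlongrightarrow> (p - q) * (1 - 1 / real s)) at_top"
    using A1 A2 A3
  proof eventually_elim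
    case (elim \<omega>)
    have "((\<lambda>t. real_of_int (fst (spider_chain s (x0, x0 + j0) (\<lambda>i. \<xi> i \<omega>) (num_rings (\<lambda>n. T n \<omega>) t))) / t)
            \<longlongrightarrow> vv s p q / (1 / (2 * (p + q)))) at_top"
      by (rule renewal[where a="\<lambda>n. real_of_int (fst (spider_chain s (x0, x0 + j0) (\<lambda>i. \<xi> i \<omega>) n))"])
         (use elim l in auto)
    thus ?case unfolding spider_walk_def val .
  qed
  have s1: "0 < 1 - 1 / real s" "1 - 1 / real s < 1" using assms(2) by (auto simp: field_simps)
  have P2: "p \<noteq> q \<longrightarrow> \<bar>(p - q) * (1 - 1 / real s)\<bar> < \<bar>p - q\<bar>"
  proof
    assume "p \<noteq> q"
    hence "\<bar>p - q\<bar> > 0" by simp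
    thus "\<bar>(p - q) * (1 - 1 / real s)\<bar> < \<bar>p - q\<bar>" using s1 by (simp add: abs_mult)
  qed
  have P3: "((\<lambda>r::nat. (p - q) * (1 - 1 / real r)) \<longlongrightarrow> p - q) at_top"
  proof -
    have "((\<lambda>r::nat. (p - q) * (1 - 1 / real r)) \<longlongrightarrow> (p - q) * (1 - 0)) at_top"
      by (intro tendsto_intros)
    thus ?thesis by simp
  qed
  show ?thesis using P1 P2 P3 by blast
qed


end
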